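(* Let $X$ be a linearly ordered set. The free $\mathrm{GD}^!$-algebra $\mathrm{GD}^!\langle X\rangle$ is linearly spanned by elements of the form $x_1*\dots*x_t*w$ with $t\ge 0$, $x_i\in X$, $x_1\le\dots\le x_t$, where $w$ is a monomial in $X$ built using the operation $\star$ only.
   Context: A $\mathrm{GD}^!$-algebra is a vector space with two bilinear operations $*$ and $\star$ such that $*$ is associative and commutative, and $(x\star y)\star z-x\star(y\star z)=(x\star z)\star y-x\star(z\star y)$, $x\star(y\star z)=y\star(x\star z)$, $x\star(y*z)=(x\star y)*z$, $x\star(y*z)+y\star(x*z)=(x*y)\star z$. *)

theory Defs
  imports Main "HOL-Library.Function_Algebras"
begin

text \<open>Nonassociative monomials in the generators X built from the two
operations: Ast = the commutative associative product *, Star = the product \<star>.\<close>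
datatype 'x mon = Gen 'x | Ast "'x mon" "'x mon" | Star "'x mon" "'x mon"

text \<open>Elements of the free (absolutely free, two-operation) algebra over a field 'k:
finitely supported functions from monomials to 'k.\<close>
definition delta :: "'x mon \<Rightarrow> ('x mon \<Rightarrow> 'k::field)" where
  "delta m = (\<lambda>u. if u = m then 1 else 0)"

definition fin_supp :: "('x mon \<Rightarrow> 'k::field) \<Rightarrow> bool" where
  "fin_supp p \<longleftrightarrow> finite {m. p m \<noteq> 0}"

text \<open>Bilinear extension of the products, multiplying a vector by a monomial.\<close>
definition ast_right :: "('x mon \<Rightarrow> 'k::field) \<Rightarrow> 'x mon \<Rightarrow> ('x mon \<Rightarrow> 'k)" where
  "ast_right p u = (\<lambda>m. case m of Ast a b \<Rightarrow> if b = u then p a else 0 | _ \<Rightarrow> 0)"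
definition ast_left :: "'x mon \<Rightarrow> ('x mon \<Rightarrow> 'k::field) \<Rightarrow> ('x mon \<Rightarrow> 'k)" where
  "ast_left u p = (\<lambda>m. case m of Ast a b \<Rightarrow> if a = u then p b else 0 | _ \<Rightarrow> 0)"
definition star_right :: "('x mon \<Rightarrow> 'k::field) \<Rightarrow> 'x mon \<Rightarrow> ('x mon \<Rightarrow> 'k)" where
  "star_right p u = (\<lambda>m. case m of Star a b \<Rightarrow> if b = u then p a else 0 | _ \<Rightarrow> 0)"
definition star_left :: "'x mon \<Rightarrow> ('x mon \<Rightarrow> 'k::field) \<Rightarrow> ('x mon \<Rightarrow> 'k)" where
  "star_left u p = (\<lambda>m. case m of Star a b \<Rightarrow> if a = u then p b else 0 | _ \<Rightarrow> 0)"

text \<open>The defining relations of GD!-algebras, instantiated at monomials a b c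
(all identities are multilinear, so these generate the full T-ideal).\<close>
definition gd_relators :: "('x mon \<Rightarrow> 'k::field) set" where
  "gd_relators = (\<Union>a b c.
     { delta (Ast a b) - delta (Ast b a),
       delta (Ast (Ast a b) c) - delta (Ast a (Ast b c)),
       delta (Star (Star a b) c) - delta (Star a (Star b c))
         - delta (Star (Star a c) b) + delta (Star a (Star c b)),
       delta (Star a (Star b c)) - delta (Star b (Star a c)),
       delta (Star a (Ast b c)) - delta (Ast (Star a b) c),
       delta (Star a (Ast b c)) + delta (Star b (Ast a c)) - delta (Star (Ast a b) c) })"

inductive_set gd_ideal :: "('x mon \<Rightarrow> 'k::field) set" where
  rel: "r \<in> gd_relators \<Longrightarrow> r \<in> gd_ideal"
| zero: "0 \<in> gd_ideal"
| add: "p \<in> gd_ideal \<Longrightarrow> q \<in> gd_ideal \<Longrightarrow> p + q \<in> gd_ideal"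
| smult: "p \<in> gd_ideal \<Longrightarrow> (\<lambda>m. c * p m) \<in> gd_ideal"
| ast_r: "p \<in> gd_ideal \<Longrightarrow> ast_right p u \<in> gd_ideal"
| ast_l: "p \<in> gd_ideal \<Longrightarrow> ast_left u p \<in> gd_ideal"
| star_r: "p \<in> gd_ideal \<Longrightarrow> star_right p u \<in> gd_ideal"
| star_l: "p \<in> gd_ideal \<Longrightarrow> star_left u p \<in> gd_ideal"

text \<open>The free GD!-algebra GD!<X> is the quotient of the free algebra by gd_ideal.\<close>

fun star_only :: "'x mon \<Rightarrow> bool" where
  "star_only (Gen x) = True"
| "star_only (Star a b) = (star_only a \<and> star_only b)"
| "star_only (Ast a b) = False"

text \<open>x1 * ... * xt * w (bracketed to the right; * is associative in GD!<X>).\<close>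
definition ast_word :: "'x list \<Rightarrow> 'x mon \<Rightarrow> 'x mon" where
  "ast_word xs w = foldr (\<lambda>x acc. Ast (Gen x) acc) xs w"

definition normal_word :: "'x::linorder mon \<Rightarrow> bool" where
  "normal_word m \<longleftrightarrow> (\<exists>xs w. sorted xs \<and> star_only w \<and> m = ast_word xs w)"

end

theory Submission
  imports Defs
begin

lemma I_neg: "p \<in> gd_ideal \<Longrightarrow> -p \<in> gd_ideal"
proof -
  assume "p \<in> gd_ideal"
  then have "(\<lambda>m. (-1) * p m) \<in> gd_ideal" by (rule gd_ideal.smult)
  moreover have "(\<lambda>m. (-1) * p m) = -p" by (rule ext) simp
  ultimately show ?thesis by simp
qed

lemma I_diff: "p \<in> gd_ideal \<Longrightarrow> q \<in> gd_ideal \<Longrightarrow> p - q \<in> gd_ideal"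
  using gd_ideal.add[OF _ I_neg] by (metis diff_conv_add_uminus)

lemma ar_delta: "ast_right (delta a) c = delta (Ast a c)"
  by (rule ext) (auto simp: ast_right_def delta_def split: mon.split)
lemma al_delta: "ast_left c (delta a) = delta (Ast c a)"
  by (rule ext) (auto simp: ast_left_def delta_def split: mon.split)
lemma sr_delta: "star_right (delta a) c = delta (Star a c)"
  by (rule ext) (auto simp: star_right_def delta_def split: mon.split)
lemma sl_delta: "star_left c (delta a) = delta (Star c a)"
  by (rule ext) (auto simp: star_left_def delta_def split: mon.split)

lemma ar_add: "ast_right (p + q) c = ast_right p c + ast_right q c"
  by (rule ext) (auto simp: ast_right_def split: mon.split)
lemma al_add: "ast_left c (p + q) = ast_left c p + ast_left c q"
  by (rule ext) (auto simp: ast_left_def split: mon.split)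
lemma sr_add: "star_right (p + q) c = star_right p c + star_right q c"
  by (rule ext) (auto simp: star_right_def split: mon.split)
lemma sl_add: "star_left c (p + q) = star_left c p + star_left c q"
  by (rule ext) (auto simp: star_left_def split: mon.split)

lemma ar_sm: "ast_right (\<lambda>m. k * p m) c = (\<lambda>m. k * ast_right p c m)"
  by (rule ext) (auto simp: ast_right_def split: mon.split)
lemma al_sm: "ast_left c (\<lambda>m. k * p m) = (\<lambda>m. k * ast_left c p m)"
  by (rule ext) (auto simp: ast_left_def split: mon.split)
lemma sr_sm: "star_right (\<lambda>m. k * p m) c = (\<lambda>m. k * star_right p c m)"
  by (rule ext) (auto simp: star_right_def split: mon.split)
lemma sl_sm: "star_left c (\<lambda>m. k * p m) = (\<lambda>m. k * star_left c p m)"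
  by (rule ext) (auto simp: star_left_def split: mon.split)

lemma ar_diff: "ast_right (p - q) c = ast_right p c - ast_right q c"
  by (rule ext) (auto simp: ast_right_def split: mon.split)
lemma al_diff: "ast_left c (p - q) = ast_left c p - ast_left c q"
  by (rule ext) (auto simp: ast_left_def split: mon.split)
lemma sr_diff: "star_right (p - q) c = star_right p c - star_right q c"
  by (rule ext) (auto simp: star_right_def split: mon.split)
lemma sl_diff: "star_left c (p - q) = star_left c p - star_left c q"
  by (rule ext) (auto simp: star_left_def split: mon.split)

definition eqv :: "'k::field itself \<Rightarrow> 'x mon \<Rightarrow> 'x mon \<Rightarrow> bool" where
  "eqv K a b \<longleftrightarrow> (delta a - delta b :: 'x mon \<Rightarrow> 'k) \<in> gd_ideal"

lemma eqv_refl: "eqv K a a"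
  unfolding eqv_def by (simp add: gd_ideal.zero)

lemma eqv_sym: "eqv K a b \<Longrightarrow> eqv K b a"
  unfolding eqv_def by (drule I_neg) simp

lemma eqv_trans[trans]: "eqv K a b \<Longrightarrow> eqv K b c \<Longrightarrow> eqv K a c"
  unfolding eqv_def by (drule (1) gd_ideal.add) simp

lemma cong_ar: "eqv K a b \<Longrightarrow> eqv K (Ast a c) (Ast b c)"
  unfolding eqv_def by (drule gd_ideal.ast_r[where u=c]) (simp add: ar_diff ar_delta)
lemma cong_al: "eqv K a b \<Longrightarrow> eqv K (Ast c a) (Ast c b)"
  unfolding eqv_def by (drule gd_ideal.ast_l[where u=c]) (simp add: al_diff al_delta)
lemma cong_sr: "eqv K a b \<Longrightarrow> eqv K (Star a c) (Star b c)"
  unfolding eqv_def by (drule gd_ideal.star_r[where u=c]) (simp add: sr_diff sr_delta)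
lemma cong_sl: "eqv K a b \<Longrightarrow> eqv K (Star c a) (Star c b)"
  unfolding eqv_def by (drule gd_ideal.star_l[where u=c]) (simp add: sl_diff sl_delta)

lemma rel_comm: "eqv K (Ast a b) (Ast b a)"
  unfolding eqv_def apply (rule gd_ideal.rel) unfolding gd_relators_def by blast

lemma rel_assoc: "eqv K (Ast (Ast a b) c) (Ast a (Ast b c))"
  unfolding eqv_def apply (rule gd_ideal.rel) unfolding gd_relators_def by blast

lemma rel5: "eqv K (Star a (Ast b c)) (Ast (Star a b) c)"
  unfolding eqv_def apply (rule gd_ideal.rel) unfolding gd_relators_def by blast

lemma rel6: "delta (Star a (Ast b c)) + delta (Star b (Ast a c)) - delta (Star (Ast a b) c) \<in> gd_ideal"
  apply (rule gd_ideal.rel) unfolding gd_relators_def by blast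

lemma rel_swap: "eqv K (Ast a (Ast b c)) (Ast b (Ast a c))"
proof -
  have "eqv K (Ast a (Ast b c)) (Ast (Ast a b) c)" by (rule eqv_sym, rule rel_assoc)
  also have "eqv K \<dots> (Ast (Ast b a) c)" by (rule cong_ar, rule rel_comm)
  also have "eqv K \<dots> (Ast b (Ast a c))" by (rule rel_assoc)
  finally show ?thesis .
qed

lemma aw_Nil[simp]: "ast_word [] w = w"
  by (simp add: ast_word_def)
lemma aw_Cons[simp]: "ast_word (x#xs) w = Ast (Gen x) (ast_word xs w)"
  by (simp add: ast_word_def)
lemma aw_app[simp]: "ast_word (xs@ys) w = ast_word xs (ast_word ys w)"
  by (simp add: ast_word_def)

lemma E_insort: "eqv K (Ast (Gen x) (ast_word ys w)) (ast_word (insort x ys) w)"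
proof (induction ys)
  case Nil show ?case by (simp add: eqv_refl)
next
  case (Cons y ys)
  show ?case
  proof (cases "x \<le> y")
    case True then show ?thesis by (simp add: eqv_refl)
  next
    case False
    have "eqv K (Ast (Gen x) (ast_word (y#ys) w)) (Ast (Gen y) (Ast (Gen x) (ast_word ys w)))"
      by (simp add: rel_swap)
    also have "eqv K \<dots> (Ast (Gen y) (ast_word (insort x ys) w))"
      by (rule cong_al) (rule Cons.IH)
    finally show ?thesis using False by simp
  qed
qed

lemma E_sort: "eqv K (ast_word xs w) (ast_word (sort xs) w)"
proof (induction xs)
  case Nil show ?case by (simp add: eqv_refl)
next
  case (Cons x xs)
  have "eqv K (ast_word (x#xs) w) (Ast (Gen x) (ast_word (sort xs) w))"
    using cong_al[OF Cons.IH] by simp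
  also have "eqv K \<dots> (ast_word (insort x (sort xs)) w)" by (rule E_insort)
  finally show ?case by simp
qed

inductive_set NS :: "('x::linorder mon \<Rightarrow> 'k::field) set" where
  nw: "normal_word n \<Longrightarrow> delta n \<in> NS"
| z: "0 \<in> NS"
| ad: "p \<in> NS \<Longrightarrow> q \<in> NS \<Longrightarrow> p + q \<in> NS"
| sm: "p \<in> NS \<Longrightarrow> (\<lambda>m. c * p m) \<in> NS"
| eq: "p - q \<in> gd_ideal \<Longrightarrow> q \<in> NS \<Longrightarrow> p \<in> NS"

definition good :: "'k::field itself \<Rightarrow> 'x::linorder mon \<Rightarrow> bool" where
  "good K m \<longleftrightarrow> (delta m :: 'x mon \<Rightarrow> 'k) \<in> NS"

lemma good_eqv: "eqv K m m' \<Longrightarrow> good K m' \<Longrightarrow> good K m"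
  unfolding eqv_def good_def by (rule NS.eq)

lemma good_word: "star_only w \<Longrightarrow> good K (ast_word xs w)"
proof -
  assume w: "star_only w"
  have "good K (ast_word (sort xs) w)"
    unfolding good_def using w by (intro NS.nw) (unfold normal_word_def, use sorted_sort in blast)
  then show ?thesis by (rule good_eqv[OF E_sort])
qed

lemma lift:
  assumes add: "\<And>p q. \<phi> (p + q) = \<phi> p + \<phi> q"
  and sm: "\<And>c p. \<phi> (\<lambda>m. c * p m) = (\<lambda>m. c * \<phi> p m)"
  and idl: "\<And>p. p \<in> gd_ideal \<Longrightarrow> \<phi> p \<in> gd_ideal"
  and base: "\<And>n. normal_word n \<Longrightarrow> \<phi> (delta n) \<in> NS"
  and "p \<in> NS"
  shows "\<phi> p \<in> NS"
  using \<open>p \<in> NS\<close>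
proof induction
  case (nw n) then show ?case by (rule base)
next
  case z
  have "\<phi> 0 = \<phi> 0 + \<phi> 0" using add[of 0 0] by simp
  hence "\<phi> 0 = 0" by simp
  then show ?case by (metis NS.z)
next
  case (ad p q) then show ?case by (subst add) (rule NS.ad)
next
  case (sm p c) then show ?case by (subst assms(2)) (rule NS.sm)
next
  case (eq p q)
  have "\<phi> p - \<phi> q = \<phi> (p - q)" using add[of "p-q" q] by simp
  then show ?case using eq idl by (metis NS.eq)
qed

lemma lift_ar: fixes p :: "'x::linorder mon \<Rightarrow> 'k::field" shows "p \<in> NS \<Longrightarrow> (\<And>n. normal_word n \<Longrightarrow> (delta (Ast n c) :: 'x mon \<Rightarrow> 'k) \<in> NS) \<Longrightarrow> ast_right p c \<in> NS"
  by (rule lift[where \<phi>="\<lambda>p. ast_right p c"]) (auto simp: ar_add ar_sm ar_delta gd_ideal.ast_r)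
lemma lift_al: fixes p :: "'x::linorder mon \<Rightarrow> 'k::field" shows "p \<in> NS \<Longrightarrow> (\<And>n. normal_word n \<Longrightarrow> (delta (Ast c n) :: 'x mon \<Rightarrow> 'k) \<in> NS) \<Longrightarrow> ast_left c p \<in> NS"
  by (rule lift[where \<phi>="\<lambda>p. ast_left c p"]) (auto simp: al_add al_sm al_delta gd_ideal.ast_l)
lemma lift_sr: fixes p :: "'x::linorder mon \<Rightarrow> 'k::field" shows "p \<in> NS \<Longrightarrow> (\<And>n. normal_word n \<Longrightarrow> (delta (Star n c) :: 'x mon \<Rightarrow> 'k) \<in> NS) \<Longrightarrow> star_right p c \<in> NS"
  by (rule lift[where \<phi>="\<lambda>p. star_right p c"]) (auto simp: sr_add sr_sm sr_delta gd_ideal.star_r)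
lemma lift_sl: fixes p :: "'x::linorder mon \<Rightarrow> 'k::field" shows "p \<in> NS \<Longrightarrow> (\<And>n. normal_word n \<Longrightarrow> (delta (Star c n) :: 'x mon \<Rightarrow> 'k) \<in> NS) \<Longrightarrow> star_left c p \<in> NS"
  by (rule lift[where \<phi>="\<lambda>p. star_left c p"]) (auto simp: sl_add sl_sm sl_delta gd_ideal.star_l)

lemma E6: "star_only w1 \<Longrightarrow> star_only w2 \<Longrightarrow> \<exists>x w. star_only w \<and> eqv K (Ast w1 w2) (Ast (Gen x) w)"
proof (induction w1 arbitrary: w2)
  case (Gen x) then show ?case by (auto intro: eqv_refl)
next
  case (Ast a b) then show ?case by simp
next
  case (Star a b)
  have sa: "star_only a" "star_only b" using Star.prems by auto
  have "eqv K (Ast (Star a b) w2) (Star a (Ast b w2))" by (rule eqv_sym, rule rel5)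
  also have "eqv K \<dots> (Star a (Ast w2 b))" by (rule cong_sl, rule rel_comm)
  also have "eqv K \<dots> (Ast (Star a w2) b)" by (rule rel5)
  also have "eqv K \<dots> (Ast b (Star a w2))" by (rule rel_comm)
  finally have 1: "eqv K (Ast (Star a b) w2) (Ast b (Star a w2))" .
  obtain x w where "star_only w" "eqv K (Ast b (Star a w2)) (Ast (Gen x) w)"
    using Star.IH(2)[OF sa(2), of "Star a w2"] sa Star.prems by auto
  then show ?case using eqv_trans[OF 1] by blast
qed

lemma E7: "eqv K (Ast (ast_word xs w1) m) (ast_word xs (Ast w1 m))"
proof (induction xs)
  case Nil show ?case by (simp add: eqv_refl)
next
  case (Cons x xs)
  have "eqv K (Ast (ast_word (x#xs) w1) m) (Ast (Gen x) (Ast (ast_word xs w1) m))"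
    by (simp add: rel_assoc)
  also have "eqv K \<dots> (ast_word (x#xs) (Ast w1 m))" using cong_al[OF Cons.IH] by simp
  finally show ?case .
qed

lemma E8: "eqv K (Ast w1 (ast_word ys w2)) (ast_word ys (Ast w1 w2))"
proof (induction ys)
  case Nil show ?case by (simp add: eqv_refl)
next
  case (Cons y ys)
  have "eqv K (Ast w1 (ast_word (y#ys) w2)) (Ast (Gen y) (Ast w1 (ast_word ys w2)))"
    by (simp add: rel_swap)
  also have "eqv K \<dots> (ast_word (y#ys) (Ast w1 w2))" using cong_al[OF Cons.IH] by simp
  finally show ?case .
qed

lemma E9: "eqv K a b \<Longrightarrow> eqv K (ast_word xs a) (ast_word xs b)"
  by (induction xs) (auto intro: cong_al)

lemma E10: "eqv K (Star a (ast_word ys w)) (ast_word ys (Star a w))"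
proof (induction ys)
  case Nil show ?case by (simp add: eqv_refl)
next
  case (Cons y ys)
  have "eqv K (Star a (ast_word (y#ys) w)) (Star a (Ast (ast_word ys w) (Gen y)))"
    by (simp add: cong_sl rel_comm)
  also have "eqv K \<dots> (Ast (Star a (ast_word ys w)) (Gen y))" by (rule rel5)
  also have "eqv K \<dots> (Ast (Gen y) (Star a (ast_word ys w)))" by (rule rel_comm)
  also have "eqv K \<dots> (ast_word (y#ys) (Star a w))" using cong_al[OF Cons.IH] by simp
  finally show ?case .
qed

lemma good_ast_normal: "normal_word n1 \<Longrightarrow> normal_word n2 \<Longrightarrow> good K (Ast n1 n2)"
proof -
  assume "normal_word n1" "normal_word n2"
  then obtain xs w1 ys w2 where s: "star_only w1" "star_only w2"
    and n: "n1 = ast_word xs w1" "n2 = ast_word ys w2"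
    unfolding normal_word_def by blast
  obtain z w where w: "star_only w" and e: "eqv K (Ast w1 w2) (Ast (Gen z) w)"
    using E6[OF s] by blast
  have "eqv K (Ast n1 n2) (ast_word xs (Ast w1 (ast_word ys w2)))" unfolding n by (rule E7)
  also have "eqv K \<dots> (ast_word xs (ast_word ys (Ast w1 w2)))" by (rule E9, rule E8)
  also have "eqv K \<dots> (ast_word xs (ast_word ys (Ast (Gen z) w)))" by (rule E9, rule E9, rule e)
  also have "\<dots> = ast_word (xs @ ys @ [z]) w" by simp
  finally show ?thesis using good_word[OF w] good_eqv by blast
qed

lemma lift_gen: fixes p :: "'x::linorder mon \<Rightarrow> 'k::field" shows "p \<in> NS \<Longrightarrow> ast_left (Gen x) p \<in> NS"
proof (rule lift_al)
  fix n :: "'x mon" assume "normal_word n"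
  then obtain ys w where "star_only w" "n = ast_word ys w" unfolding normal_word_def by blast
  then have "Ast (Gen x) n = ast_word (x#ys) w" by simp
  then show "(delta (Ast (Gen x) n) :: 'x mon \<Rightarrow> 'k) \<in> NS" using good_word[OF \<open>star_only w\<close>, of "TYPE('k)"] unfolding good_def by metis
qed

lemma good_aw: "good K m \<Longrightarrow> good K (ast_word ys m)"
proof (induction ys)
  case Nil then show ?case by simp
next
  case (Cons y ys)
  then show ?case unfolding good_def by (simp add: al_delta[symmetric] lift_gen)
qed

lemma good_star_word: "star_only w1 \<Longrightarrow> star_only c \<Longrightarrow> good K (Star (ast_word xs w1) c)"
proof (induction xs)
  case Nil then show ?case using good_word[of "Star w1 c" K "[]"] by simp
next
  case (Cons x xs)
  define r where "r = ast_word xs w1"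
  obtain z w where w: "star_only w" and e: "eqv K (Ast w1 c) (Ast (Gen z) w)"
    using E6[OF Cons.prems] by blast
  have "eqv K (Star (Gen x) (Ast r c)) (Star (Gen x) (ast_word xs (Ast w1 c)))"
    unfolding r_def by (rule cong_sl, rule E7)
  also have "eqv K \<dots> (Star (Gen x) (ast_word xs (Ast (Gen z) w)))" by (rule cong_sl, rule E9, rule e)
  also have "\<dots> = Star (Gen x) (ast_word (xs@[z]) w)" by simp
  also have "eqv K \<dots> (ast_word (xs@[z]) (Star (Gen x) w))" by (rule E10)
  finally have A: "good K (Star (Gen x) (Ast r c))"
    using good_word[of "Star (Gen x) w" K] w good_eqv by fastforce
  have "eqv K (Star r (Ast (Gen x) c)) (ast_word [x] (Star r c))"
    using E10[of K r "[x]" c] by simp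
  moreover have "good K (ast_word [x] (Star r c))"
    by (rule good_aw) (use Cons r_def in simp)
  ultimately have B: "good K (Star r (Ast (Gen x) c))" by (rule good_eqv)
  have "(delta (Star (Ast (Gen x) r) c) :: _ \<Rightarrow> 'b) -
        (delta (Star (Gen x) (Ast r c)) + delta (Star r (Ast (Gen x) c))) \<in> gd_ideal"
    using I_neg[OF rel6[of "Gen x" r c]] by (simp add: algebra_simps)
  moreover have "(delta (Star (Gen x) (Ast r c)) + delta (Star r (Ast (Gen x) c)) :: _ \<Rightarrow> 'b) \<in> NS"
    using A B unfolding good_def by (rule NS.ad)
  ultimately have "(delta (Star (Ast (Gen x) r) c) :: _ \<Rightarrow> 'b) \<in> NS" by (rule NS.eq)
  then show ?case unfolding good_def r_def by simp
qed

lemma good_star_normal: "normal_word n1 \<Longrightarrow> normal_word n2 \<Longrightarrow> good K (Star n1 n2)"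
proof -
  assume "normal_word n1" "normal_word n2"
  then obtain xs w1 ys w2 where s: "star_only w1" "star_only w2"
    and n: "n1 = ast_word xs w1" "n2 = ast_word ys w2"
    unfolding normal_word_def by blast
  have "eqv K (Star n1 n2) (ast_word ys (Star n1 w2))" unfolding n by (rule E10)
  moreover have "good K (ast_word ys (Star n1 w2))"
    by (rule good_aw) (use good_star_word[OF s] n in simp)
  ultimately show ?thesis by (rule good_eqv)
qed

lemma all_good: fixes K :: "'k::field itself" and m :: "'x::linorder mon" shows "good K m"
proof (induction m)
  case (Gen x) then show ?case using good_word[of "Gen x" K "[]"] by simp
next
  case (Ast a b)
  have "(ast_right (delta a) b :: _ \<Rightarrow> 'k) \<in> NS"
  proof (rule lift_ar)
    show "(delta a :: _ \<Rightarrow> 'k) \<in> NS" using Ast unfolding good_def by simp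
    fix n :: "'x mon" assume n: "normal_word n"
    have "(ast_left n (delta b) :: _ \<Rightarrow> 'k) \<in> NS"
    proof (rule lift_al)
      show "(delta b :: _ \<Rightarrow> 'k) \<in> NS" using Ast unfolding good_def by simp
      fix n' :: "'x mon" assume "normal_word n'"
      then show "(delta (Ast n n') :: _ \<Rightarrow> 'k) \<in> NS"
        using good_ast_normal[OF n] unfolding good_def by blast
    qed
    then show "(delta (Ast n b) :: _ \<Rightarrow> 'k) \<in> NS" by (simp add: al_delta)
  qed
  then show ?case unfolding good_def by (simp add: ar_delta)
next
  case (Star a b)
  have "(star_right (delta a) b :: _ \<Rightarrow> 'k) \<in> NS"
  proof (rule lift_sr)
    show "(delta a :: _ \<Rightarrow> 'k) \<in> NS" using Star unfolding good_def by simp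
    fix n :: "'x mon" assume n: "normal_word n"
    have "(star_left n (delta b) :: _ \<Rightarrow> 'k) \<in> NS"
    proof (rule lift_sl)
      show "(delta b :: _ \<Rightarrow> 'k) \<in> NS" using Star unfolding good_def by simp
      fix n' :: "'x mon" assume "normal_word n'"
      then show "(delta (Star n n') :: _ \<Rightarrow> 'k) \<in> NS"
        using good_star_normal[OF n] unfolding good_def by blast
    qed
    then show "(delta (Star n b) :: _ \<Rightarrow> 'k) \<in> NS" by (simp add: sl_delta)
  qed
  then show ?case unfolding good_def by (simp add: sr_delta)
qed

lemma sum_fun_apply: "(\<Sum>m\<in>S. f m) u = (\<Sum>m\<in>S. f m u)"
  by (induction S rule: infinite_finite_induct) auto

definition inN :: "('x::linorder mon \<Rightarrow> 'k::field) \<Rightarrow> bool" where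
  "inN p \<longleftrightarrow> (\<exists>(S :: 'x mon set) (c :: 'x mon \<Rightarrow> 'k). finite S \<and> (\<forall>m\<in>S. normal_word m) \<and>
           p - (\<Sum>m\<in>S. (\<lambda>u. c m * delta m u)) \<in> gd_ideal)"

lemma lc_extend:
  assumes "finite T" "S \<subseteq> T"
  shows "(\<Sum>m\<in>S. (\<lambda>u. c m * delta m u)) = (\<Sum>m\<in>T. (\<lambda>u. (if m \<in> S then c m else 0) * delta m u))"
  by (rule sum.mono_neutral_cong_right[symmetric]) (use assms in \<open>auto simp: zero_fun_def\<close>)

lemma my_add_diff_add: "(a::'a::ab_group_add) + c - (b + d) = (a - b) + (c - d)"
  by (simp add: algebra_simps)

lemma NS_inN: "p \<in> NS \<Longrightarrow> inN p"
proof (induction rule: NS.induct)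
  case (nw n)
  show ?case unfolding inN_def
    by (rule exI[of _ "{n}"], rule exI[of _ "\<lambda>_. 1"]) (simp add: nw gd_ideal.zero)
next
  case z
  show ?case unfolding inN_def
    by (rule exI[of _ "{}"]) (simp add: gd_ideal.zero)
next
  case (ad p q)
  obtain S1 c1 where 1: "finite S1" "\<forall>m\<in>S1. normal_word m" "p - (\<Sum>m\<in>S1. (\<lambda>u. c1 m * delta m u)) \<in> gd_ideal"
    using ad unfolding inN_def by blast
  obtain S2 c2 where 2: "finite S2" "\<forall>m\<in>S2. normal_word m" "q - (\<Sum>m\<in>S2. (\<lambda>u. c2 m * delta m u)) \<in> gd_ideal"
    using ad unfolding inN_def by blast
  define T where "T = S1 \<union> S2"
  define d1 where "d1 = (\<lambda>m. if m \<in> S1 then c1 m else 0)"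
  define d2 where "d2 = (\<lambda>m. if m \<in> S2 then c2 m else 0)"
  have fT: "finite T" using 1 2 T_def by simp
  have e1: "(\<Sum>m\<in>S1. (\<lambda>u. c1 m * delta m u)) = (\<Sum>m\<in>T. (\<lambda>u. d1 m * delta m u))"
    unfolding d1_def by (rule lc_extend[OF fT]) (simp add: T_def)
  have e2: "(\<Sum>m\<in>S2. (\<lambda>u. c2 m * delta m u)) = (\<Sum>m\<in>T. (\<lambda>u. d2 m * delta m u))"
    unfolding d2_def by (rule lc_extend[OF fT]) (simp add: T_def)
  have e3: "(\<Sum>m\<in>T. (\<lambda>u. d1 m * delta m u)) + (\<Sum>m\<in>T. (\<lambda>u. d2 m * delta m u))
      = (\<Sum>m\<in>T. (\<lambda>u. (d1 m + d2 m) * delta m u))"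
    by (subst sum.distrib[symmetric]) (rule sum.cong, simp, rule ext, simp add: algebra_simps)
  have E: "(p + q) - (\<Sum>m\<in>T. (\<lambda>u. (d1 m + d2 m) * delta m u))
     = (p - (\<Sum>m\<in>S1. (\<lambda>u. c1 m * delta m u))) + (q - (\<Sum>m\<in>S2. (\<lambda>u. c2 m * delta m u)))"
    unfolding e1 e2 e3[symmetric] by (rule my_add_diff_add)
  have "(p + q) - (\<Sum>m\<in>T. (\<lambda>u. (d1 m + d2 m) * delta m u)) \<in> gd_ideal"
    by (rule ssubst[OF E]) (rule gd_ideal.add[OF 1(3) 2(3)])
  moreover have "\<forall>m\<in>T. normal_word m" using 1 2 T_def by auto
  ultimately show ?case unfolding inN_def using fT
    by (intro exI[of _ T] exI[of _ "\<lambda>m. d1 m + d2 m"]) simp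
next
  case (sm p c)
  obtain S1 c1 where 1: "finite S1" "\<forall>m\<in>S1. normal_word m" "p - (\<Sum>m\<in>S1. (\<lambda>u. c1 m * delta m u)) \<in> gd_ideal"
    using sm unfolding inN_def by blast
  have A: "(\<lambda>m. c * (p - (\<Sum>m\<in>S1. (\<lambda>u. c1 m * delta m u))) m) \<in> gd_ideal"
    by (rule gd_ideal.smult[OF 1(3)])
  have B: "(\<lambda>m. c * (p - (\<Sum>m\<in>S1. (\<lambda>u. c1 m * delta m u))) m)
     = (\<lambda>m. c * p m) - (\<Sum>m\<in>S1. (\<lambda>u. (c * c1 m) * delta m u))"
    by (rule ext) (simp add: sum_fun_apply right_diff_distrib sum_distrib_left mult.assoc)
  have "(\<lambda>m. c * p m) - (\<Sum>m\<in>S1. (\<lambda>u. (c * c1 m) * delta m u)) \<in> gd_ideal"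
    using A unfolding B .
  then show ?case unfolding inN_def using 1(1,2)
    by (intro exI[of _ S1] exI[of _ "\<lambda>m. c * c1 m"]) simp
next
  case (eq p q)
  obtain S1 c1 where 1: "finite S1" "\<forall>m\<in>S1. normal_word m" "q - (\<Sum>m\<in>S1. (\<lambda>u. c1 m * delta m u)) \<in> gd_ideal"
    using eq unfolding inN_def by blast
  have "p - (\<Sum>m\<in>S1. (\<lambda>u. c1 m * delta m u)) = (p - q) + (q - (\<Sum>m\<in>S1. (\<lambda>u. c1 m * delta m u)))"
    by simp
  then have "p - (\<Sum>m\<in>S1. (\<lambda>u. c1 m * delta m u)) \<in> gd_ideal"
    using gd_ideal.add[OF eq(1) 1(3)] by simp
  then show ?case unfolding inN_def using 1 by blast
qed

lemma sum_NS: "finite S \<Longrightarrow> (\<forall>m\<in>S. f m \<in> NS) \<Longrightarrow> (\<Sum>m\<in>S. f m) \<in> NS"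
  by (induction S rule: finite_induct) (auto intro: NS.z NS.ad)

theorem mainTheorem5:
  fixes p :: "'x::linorder mon \<Rightarrow> 'k::field"
  assumes "fin_supp p"
  shows "\<exists>(S :: 'x mon set) (c :: 'x mon \<Rightarrow> 'k). finite S \<and> (\<forall>m\<in>S. normal_word m) \<and>
           p - (\<Sum>m\<in>S. (\<lambda>u. c m * delta m u)) \<in> gd_ideal"
proof -
  define S where "S = {m. p m \<noteq> 0}"
  have fS: "finite S" using assms unfolding fin_supp_def S_def .
  have pe: "p = (\<Sum>m\<in>S. (\<lambda>u. p m * delta m u))"
  proof (rule ext)
    fix u
    have "(\<Sum>m\<in>S. (\<lambda>u. p m * delta m u)) u = (\<Sum>m\<in>S. (if m = u then p m else 0))"
      unfolding sum_fun_apply by (rule sum.cong) (auto simp: delta_def)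
    also have "\<dots> = p u" using fS by (simp add: sum.delta S_def)
    finally show "p u = (\<Sum>m\<in>S. (\<lambda>u. p m * delta m u)) u" by simp
  qed
  have "(\<Sum>m\<in>S. (\<lambda>u. p m * delta m u)) \<in> NS"
  proof (rule sum_NS[OF fS], intro ballI)
    fix m
    have "(delta m :: 'x mon \<Rightarrow> 'k) \<in> NS" using all_good[of "TYPE('k)" m] unfolding good_def .
    then show "(\<lambda>u. p m * delta m u) \<in> NS" by (rule NS.sm)
  qed
  then have "inN p" by (subst pe) (rule NS_inN)
  then show ?thesis unfolding inN_def .
qed

end
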